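(* Let $A$ and $B$ be square $\mathbb{N}$-matrices. If $A$ and $B$ are balanced strong shift equivalent, then $A$ and $B$ are unitally shift equivalent.
   Context: A rectangular $\{0,1\}$-matrix $D$ is a division matrix if every row contains at least one $1$ and every column contains exactly one $1$. For square $\mathbb{N}$-matrices $A,B$ with no zero rows, $B$ is an outsplit of $A$ if there are a division matrix $D$ and an $\mathbb{N}$-matrix $E$ with $A=DE$ and $B=ED$. $A$ and $B$ are balanced elementary strong shift equivalent if there are a division matrix $D$ and rectangular $\mathbb{N}$-matrices $R_A,R_B$ with $A=D^tR_A$, $B=D^tR_B$ and $R_AD^t=R_BD^t$. Balanced strong shift equivalence is the equivalence relation generated by balanced elementary strong shift equivalence and outsplits. Two square $\mathbb{N}$-matrices $A,B$ are shift equivalent if there are an integer $\ell\ge1$ and rectangular $\mathbb{N}$-matrices $R,S$ with $A^\ell=RS$, $B^\ell=SR$, $AR=RB$, $BS=SA$. Such a shift equivalence $(R,S)$ is unital if there are $m,k\in\mathbb{N}$ with $(B^t)^mR^t\underline{1}=(B^t)^{m+k}\underline{1}$, where $\underline1$ is the all-ones column vector. $A$ and $B$ are unitally shift equivalent if a unital shift equivalence from $A$ to $B$ exists. *)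

theory Defs
  imports "Jordan_Normal_Form.Matrix"
begin

definition division_mat :: "nat mat \<Rightarrow> bool" where
  "division_mat D \<longleftrightarrow>
     (\<forall>i<dim_row D. \<forall>j<dim_col D. D $$ (i,j) \<in> {0,1}) \<and>
     (\<forall>i<dim_row D. \<exists>j<dim_col D. D $$ (i,j) = 1) \<and>
     (\<forall>j<dim_col D. \<exists>!i. i < dim_row D \<and> D $$ (i,j) = 1)"

definition no_zero_rows :: "nat mat \<Rightarrow> bool" where
  "no_zero_rows A \<longleftrightarrow> (\<forall>i<dim_row A. \<exists>j<dim_col A. A $$ (i,j) \<noteq> 0)"

definition sq_nzr :: "nat mat \<Rightarrow> bool" where
  "sq_nzr A \<longleftrightarrow> square_mat A \<and> no_zero_rows A"

definition outsplit :: "nat mat \<Rightarrow> nat mat \<Rightarrow> bool" where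
  "outsplit A B \<longleftrightarrow> sq_nzr A \<and> sq_nzr B \<and>
     (\<exists>D E. division_mat D \<and> dim_col D = dim_row E \<and> dim_col E = dim_row D \<and>
            A = D * E \<and> B = E * D)"

definition balanced_elem_sse :: "nat mat \<Rightarrow> nat mat \<Rightarrow> bool" where
  "balanced_elem_sse A B \<longleftrightarrow> sq_nzr A \<and> sq_nzr B \<and>
     (\<exists>D RA RB. division_mat D \<and>
        dim_row RA = dim_row D \<and> dim_row RB = dim_row D \<and>
        A = transpose_mat D * RA \<and> B = transpose_mat D * RB \<and>
        RA * transpose_mat D = RB * transpose_mat D)"

definition balanced_sse :: "nat mat \<Rightarrow> nat mat \<Rightarrow> bool" where
  "balanced_sse = (\<lambda>A B. balanced_elem_sse A B \<or> balanced_elem_sse B A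
                         \<or> outsplit A B \<or> outsplit B A)\<^sup>*\<^sup>*"

definition unital_shift_equiv :: "nat mat \<Rightarrow> nat mat \<Rightarrow> bool" where
  "unital_shift_equiv A B \<longleftrightarrow> square_mat A \<and> square_mat B \<and>
     (\<exists>l R S. l \<ge> 1 \<and> R \<in> carrier_mat (dim_row A) (dim_row B) \<and>
        S \<in> carrier_mat (dim_row B) (dim_row A) \<and>
        A ^\<^sub>m l = R * S \<and> B ^\<^sub>m l = S * R \<and> A * R = R * B \<and> B * S = S * A \<and>
        (\<exists>m k. (transpose_mat B ^\<^sub>m m) *\<^sub>v (transpose_mat R *\<^sub>v vec (dim_row A) (\<lambda>_. 1))
               = (transpose_mat B ^\<^sub>m (m + k)) *\<^sub>v vec (dim_row B) (\<lambda>_. 1)))"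

end

theory Submission
  imports Defs
begin

lemma pow_mat_add:
  assumes A: "(A :: nat mat) \<in> carrier_mat n n"
  shows "A ^\<^sub>m (a + b) = A ^\<^sub>m a * A ^\<^sub>m b"
proof (induct b)
  case 0
  then show ?case using A by simp
next
  case (Suc b)
  have "A ^\<^sub>m (a + Suc b) = (A ^\<^sub>m a * A ^\<^sub>m b) * A" using Suc by simp
  also have "\<dots> = A ^\<^sub>m a * (A ^\<^sub>m b * A)"
    by (rule assoc_mult_mat[of _ n n _ n _ n], insert A, auto)
  finally show ?case by simp
qed

lemma pow_mat_Suc_left:
  assumes A: "(A :: nat mat) \<in> carrier_mat n n"
  shows "A ^\<^sub>m (Suc k) = A * A ^\<^sub>m k"
  using pow_mat_add[OF A, of 1 k] A by simp

lemma pow_intertwine: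
  assumes A: "(A :: nat mat) \<in> carrier_mat n n" and B: "B \<in> carrier_mat p p"
    and R: "R \<in> carrier_mat n p" and AR: "A * R = R * B"
  shows "A ^\<^sub>m k * R = R * B ^\<^sub>m k"
proof (induct k)
  case 0
  then show ?case using A R B by simp
next
  case (Suc k)
  have "A ^\<^sub>m Suc k * R = A ^\<^sub>m k * (A * R)"
    using A R by (simp add: assoc_mult_mat[of _ n n _ n _ p])
  also have "\<dots> = (A ^\<^sub>m k * R) * B" using AR A R B
    by (simp add: assoc_mult_mat[of _ n n _ p _ p])
  also have "\<dots> = R * (B ^\<^sub>m k * B)" using Suc A R B
    by (simp add: assoc_mult_mat[of _ n p _ p _ p])
  finally show ?case by simp
qed

lemma transpose_pow:
  assumes A: "(A :: nat mat) \<in> carrier_mat n n"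
  shows "transpose_mat (A ^\<^sub>m k) = (transpose_mat A) ^\<^sub>m k"
proof (induct k)
  case 0
  then show ?case using A by simp
next
  case (Suc k)
  have "transpose_mat (A ^\<^sub>m Suc k) = transpose_mat A * transpose_mat (A ^\<^sub>m k)"
    using A by (simp add: transpose_mult[of _ n n _ n])
  also have "\<dots> = transpose_mat A ^\<^sub>m Suc k"
    using Suc pow_mat_Suc_left[of "transpose_mat A" n k] A by simp
  finally show ?case .
qed

definition cs :: "nat mat \<Rightarrow> nat vec" where
  "cs X = transpose_mat X *\<^sub>v vec (dim_row X) (\<lambda>_. 1)"

lemma cs_mult:
  assumes X: "(X :: nat mat) \<in> carrier_mat n p" and Y: "Y \<in> carrier_mat p q"
  shows "cs (X * Y) = transpose_mat Y *\<^sub>v cs X"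
proof -
  have "cs (X * Y) = (transpose_mat Y * transpose_mat X) *\<^sub>v vec n (\<lambda>_. 1)"
    unfolding cs_def using X Y by (simp add: transpose_mult[of _ n p _ q])
  also have "\<dots> = transpose_mat Y *\<^sub>v (transpose_mat X *\<^sub>v vec n (\<lambda>_. 1))"
    by (rule assoc_mult_mat_vec[of _ q p _ n], insert X Y, auto)
  finally show ?thesis unfolding cs_def using X by simp
qed

lemma cs_one: "cs (1\<^sub>m n) = vec n (\<lambda>_. 1)"
  unfolding cs_def by simp

lemma unital_cs:
  assumes B: "(B :: nat mat) \<in> carrier_mat p p" and R: "R \<in> carrier_mat n p"
  shows "(transpose_mat B ^\<^sub>m m) *\<^sub>v (transpose_mat R *\<^sub>v vec n (\<lambda>_. 1)) = cs (R * B ^\<^sub>m m)"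
    and "(transpose_mat B ^\<^sub>m j) *\<^sub>v vec p (\<lambda>_. 1) = cs (B ^\<^sub>m j)"
proof -
  have "cs (R * B ^\<^sub>m m) = transpose_mat (B ^\<^sub>m m) *\<^sub>v cs R"
    by (rule cs_mult[of _ n p _ p], insert B R, auto)
  also have "\<dots> = (transpose_mat B ^\<^sub>m m) *\<^sub>v (transpose_mat R *\<^sub>v vec n (\<lambda>_. 1))"
    using transpose_pow[OF B] R unfolding cs_def by simp
  finally show "(transpose_mat B ^\<^sub>m m) *\<^sub>v (transpose_mat R *\<^sub>v vec n (\<lambda>_. 1)) = cs (R * B ^\<^sub>m m)" by simp
  show "(transpose_mat B ^\<^sub>m j) *\<^sub>v vec p (\<lambda>_. 1) = cs (B ^\<^sub>m j)"
    using transpose_pow[OF B] B unfolding cs_def by simp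
qed

lemma use_intro:
  assumes A: "(A :: nat mat) \<in> carrier_mat n n" and B: "B \<in> carrier_mat p p"
    and R: "R \<in> carrier_mat n p" and S: "S \<in> carrier_mat p n" and l: "l \<ge> 1"
    and e1: "A ^\<^sub>m l = R * S" and e2: "B ^\<^sub>m l = S * R"
    and e3: "A * R = R * B" and e4: "B * S = S * A"
    and u: "cs (R * B ^\<^sub>m m) = cs (B ^\<^sub>m (m + k))"
  shows "unital_shift_equiv A B"
proof -
  have dA: "dim_row A = n" and dB: "dim_row B = p" using A B by auto
  have sq: "square_mat A" "square_mat B" using A B by auto
  have u': "(transpose_mat B ^\<^sub>m m) *\<^sub>v (transpose_mat R *\<^sub>v vec (dim_row A) (\<lambda>_. 1))
               = (transpose_mat B ^\<^sub>m (m + k)) *\<^sub>v vec (dim_row B) (\<lambda>_. 1)"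
    unfolding dA dB unital_cs[OF B R] u ..
  have R': "R \<in> carrier_mat (dim_row A) (dim_row B)" and S': "S \<in> carrier_mat (dim_row B) (dim_row A)"
    unfolding dA dB by (fact R, fact S)
  show ?thesis unfolding unital_shift_equiv_def
    using sq l R' S' e1 e2 e3 e4 u' by blast
qed

lemma use_elim:
  assumes "unital_shift_equiv (A :: nat mat) B"
  obtains n p l R S m k where "A \<in> carrier_mat n n" "B \<in> carrier_mat p p"
    "R \<in> carrier_mat n p" "S \<in> carrier_mat p n" "l \<ge> 1"
    "A ^\<^sub>m l = R * S" "B ^\<^sub>m l = S * R"
    "A * R = R * B" "B * S = S * A"
    "cs (R * B ^\<^sub>m m) = cs (B ^\<^sub>m (m + k))"
proof -
  obtain l R S m k where
    sq: "square_mat A" "square_mat B" and l: "l \<ge> 1" and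
    R: "R \<in> carrier_mat (dim_row A) (dim_row B)" and
    S: "S \<in> carrier_mat (dim_row B) (dim_row A)" and
    e: "A ^\<^sub>m l = R * S" "B ^\<^sub>m l = S * R" "A * R = R * B" "B * S = S * A" and
    u: "(transpose_mat B ^\<^sub>m m) *\<^sub>v (transpose_mat R *\<^sub>v vec (dim_row A) (\<lambda>_. 1))
               = (transpose_mat B ^\<^sub>m (m + k)) *\<^sub>v vec (dim_row B) (\<lambda>_. 1)"
    using assms[unfolded unital_shift_equiv_def] apply (elim conjE exE)
    apply (erule_tac x=l in meta_allE, erule_tac x=R in meta_allE, erule_tac x=S in meta_allE,
      erule_tac x=m in meta_allE, erule_tac x=k in meta_allE)
    apply (erule meta_impE, assumption)+ by assumption
  have A: "A \<in> carrier_mat (dim_row A) (dim_row A)" using sq by (intro carrier_matI) auto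
  have B: "B \<in> carrier_mat (dim_row B) (dim_row B)" using sq by (intro carrier_matI) auto
  show ?thesis
    apply (rule that[OF A B R S l e])
    using u unfolding unital_cs[OF B R] .
qed


lemma cs_cong:
  assumes X: "(X :: nat mat) \<in> carrier_mat a b" and X': "X' \<in> carrier_mat a' b"
    and Y: "Y \<in> carrier_mat b c" and e: "cs X = cs X'"
  shows "cs (X * Y) = cs (X' * Y)"
  using cs_mult[OF X Y] cs_mult[OF X' Y] e by simp

lemma use_trans:
  assumes h1: "unital_shift_equiv (A :: nat mat) B" and h2: "unital_shift_equiv B C"
  shows "unital_shift_equiv A C"
proof -
  obtain n p l1 R1 S1 m1 k1 where hA: "A \<in> carrier_mat n n" and hB: "B \<in> carrier_mat p p"
    and R1: "R1 \<in> carrier_mat n p" and S1: "S1 \<in> carrier_mat p n" and l1: "l1 \<ge> 1"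
    and a1: "A ^\<^sub>m l1 = R1 * S1" and a2: "B ^\<^sub>m l1 = S1 * R1"
    and a3: "A * R1 = R1 * B" and a4: "B * S1 = S1 * A"
    and au: "cs (R1 * B ^\<^sub>m m1) = cs (B ^\<^sub>m (m1 + k1))"
    by (rule use_elim[OF h1])
  obtain p' q l2 R2 S2 m2 k2 where hB': "B \<in> carrier_mat p' p'" and hC: "C \<in> carrier_mat q q"
    and R2': "R2 \<in> carrier_mat p' q" and S2': "S2 \<in> carrier_mat q p'" and l2: "l2 \<ge> 1"
    and b1: "B ^\<^sub>m l2 = R2 * S2" and b2: "C ^\<^sub>m l2 = S2 * R2"
    and b3: "B * R2 = R2 * C" and b4: "C * S2 = S2 * B"
    and bu: "cs (R2 * C ^\<^sub>m m2) = cs (C ^\<^sub>m (m2 + k2))"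
    by (rule use_elim[OF h2])
  have pp: "p' = p" using hB hB' by auto
  have R2: "R2 \<in> carrier_mat p q" and S2: "S2 \<in> carrier_mat q p" using R2' S2' pp by auto
  note mc = mult_carrier_mat
  have PA: "\<And>k. A ^\<^sub>m k \<in> carrier_mat n n" using hA by simp
  have PB: "\<And>k. B ^\<^sub>m k \<in> carrier_mat p p" using hB by simp
  have PC: "\<And>k. C ^\<^sub>m k \<in> carrier_mat q q" using hC by simp
  have iA: "\<And>k. A ^\<^sub>m k * R1 = R1 * B ^\<^sub>m k" by (rule pow_intertwine[OF hA hB R1 a3])
  have iB: "\<And>k. B ^\<^sub>m k * R2 = R2 * C ^\<^sub>m k" by (rule pow_intertwine[OF hB hC R2 b3])
  have iC: "\<And>k. C ^\<^sub>m k * S2 = S2 * B ^\<^sub>m k" by (rule pow_intertwine[OF hC hB S2 b4])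
  have iB2: "\<And>k. B ^\<^sub>m k * S1 = S1 * A ^\<^sub>m k" by (rule pow_intertwine[OF hB hA S1 a4])
  have e1: "A ^\<^sub>m (l2 + l1) = (R1 * R2) * (S2 * S1)"
  proof -
    have "(R1 * R2) * (S2 * S1) = R1 * (R2 * (S2 * S1))" by (rule assoc_mult_mat[OF R1 R2 mc[OF S2 S1]])
    also have "R2 * (S2 * S1) = (R2 * S2) * S1" by (rule assoc_mult_mat[OF R2 S2 S1, symmetric])
    also have "\<dots> = B ^\<^sub>m l2 * S1" using b1 by simp
    also have "\<dots> = S1 * A ^\<^sub>m l2" by (rule iB2)
    also have "R1 * (S1 * A ^\<^sub>m l2) = (R1 * S1) * A ^\<^sub>m l2" by (rule assoc_mult_mat[OF R1 S1 PA, symmetric])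
    also have "\<dots> = A ^\<^sub>m l1 * A ^\<^sub>m l2" using a1 by simp
    also have "\<dots> = A ^\<^sub>m (l1 + l2)" by (rule pow_mat_add[OF hA, symmetric])
    finally show ?thesis by (simp add: add.commute)
  qed
  have e2: "C ^\<^sub>m (l2 + l1) = (S2 * S1) * (R1 * R2)"
  proof -
    have "(S2 * S1) * (R1 * R2) = S2 * (S1 * (R1 * R2))" by (rule assoc_mult_mat[OF S2 S1 mc[OF R1 R2]])
    also have "S1 * (R1 * R2) = (S1 * R1) * R2" by (rule assoc_mult_mat[OF S1 R1 R2, symmetric])
    also have "\<dots> = B ^\<^sub>m l1 * R2" using a2 by simp
    also have "\<dots> = R2 * C ^\<^sub>m l1" by (rule iB)
    also have "S2 * (R2 * C ^\<^sub>m l1) = (S2 * R2) * C ^\<^sub>m l1" by (rule assoc_mult_mat[OF S2 R2 PC, symmetric])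
    also have "\<dots> = C ^\<^sub>m l2 * C ^\<^sub>m l1" using b2 by simp
    also have "\<dots> = C ^\<^sub>m (l2 + l1)" by (rule pow_mat_add[OF hC, symmetric])
    finally show ?thesis by simp
  qed
  have e3: "A * (R1 * R2) = (R1 * R2) * C"
  proof -
    have "A * (R1 * R2) = (A * R1) * R2" by (rule assoc_mult_mat[OF hA R1 R2, symmetric])
    also have "\<dots> = (R1 * B) * R2" using a3 by simp
    also have "\<dots> = R1 * (B * R2)" by (rule assoc_mult_mat[OF R1 hB R2])
    also have "\<dots> = R1 * (R2 * C)" using b3 by simp
    also have "\<dots> = (R1 * R2) * C" by (rule assoc_mult_mat[OF R1 R2 hC, symmetric])
    finally show ?thesis .
  qed
  have e4: "C * (S2 * S1) = (S2 * S1) * A"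
  proof -
    have "C * (S2 * S1) = (C * S2) * S1" by (rule assoc_mult_mat[OF hC S2 S1, symmetric])
    also have "\<dots> = (S2 * B) * S1" using b4 by simp
    also have "\<dots> = S2 * (B * S1)" by (rule assoc_mult_mat[OF S2 hB S1])
    also have "\<dots> = S2 * (S1 * A)" using a4 by simp
    also have "\<dots> = (S2 * S1) * A" by (rule assoc_mult_mat[OF S2 S1 hA, symmetric])
    finally show ?thesis .
  qed
  have eu: "cs ((R1 * R2) * C ^\<^sub>m (m1 + m2)) = cs (C ^\<^sub>m ((m1 + m2) + (k1 + k2)))"
  proof -
    have "(R1 * R2) * C ^\<^sub>m (m1 + m2) = R1 * (R2 * C ^\<^sub>m (m1 + m2))"
      by (rule assoc_mult_mat[OF R1 R2 PC])
    also have "R2 * C ^\<^sub>m (m1 + m2) = B ^\<^sub>m (m1 + m2) * R2" by (rule iB[symmetric])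
    also have "\<dots> = (B ^\<^sub>m m1 * B ^\<^sub>m m2) * R2" by (simp add: pow_mat_add[OF hB])
    also have "\<dots> = B ^\<^sub>m m1 * (B ^\<^sub>m m2 * R2)" by (rule assoc_mult_mat[OF PB PB R2])
    also have "R1 * (B ^\<^sub>m m1 * (B ^\<^sub>m m2 * R2)) = (R1 * B ^\<^sub>m m1) * (B ^\<^sub>m m2 * R2)"
      by (rule assoc_mult_mat[OF R1 PB mc[OF PB R2], symmetric])
    finally have s1: "(R1 * R2) * C ^\<^sub>m (m1 + m2) = (R1 * B ^\<^sub>m m1) * (B ^\<^sub>m m2 * R2)" .
    have "cs ((R1 * B ^\<^sub>m m1) * (B ^\<^sub>m m2 * R2)) = cs (B ^\<^sub>m (m1 + k1) * (B ^\<^sub>m m2 * R2))"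
      by (rule cs_cong[OF mc[OF R1 PB[of m1]] PB[of "m1+k1"] mc[OF PB[of m2] R2] au])
    also have "B ^\<^sub>m (m1 + k1) * (B ^\<^sub>m m2 * R2) = (B ^\<^sub>m (m1 + k1) * B ^\<^sub>m m2) * R2"
      by (rule assoc_mult_mat[OF PB PB R2, symmetric])
    also have "\<dots> = B ^\<^sub>m (m1 + k1 + m2) * R2" by (simp add: pow_mat_add[OF hB])
    also have "\<dots> = R2 * C ^\<^sub>m (m2 + (m1 + k1))" by (simp add: iB add.commute add.left_commute)
    also have "\<dots> = R2 * (C ^\<^sub>m m2 * C ^\<^sub>m (m1 + k1))" by (simp add: pow_mat_add[OF hC])
    also have "\<dots> = (R2 * C ^\<^sub>m m2) * C ^\<^sub>m (m1 + k1)" by (rule assoc_mult_mat[OF R2 PC PC, symmetric])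
    finally have s2: "cs ((R1 * B ^\<^sub>m m1) * (B ^\<^sub>m m2 * R2)) = cs ((R2 * C ^\<^sub>m m2) * C ^\<^sub>m (m1 + k1))" .
    have "cs ((R2 * C ^\<^sub>m m2) * C ^\<^sub>m (m1 + k1)) = cs (C ^\<^sub>m (m2 + k2) * C ^\<^sub>m (m1 + k1))"
      by (rule cs_cong[OF mc[OF R2 PC[of m2]] PC[of "m2+k2"] PC[of "m1+k1"] bu])
    also have "C ^\<^sub>m (m2 + k2) * C ^\<^sub>m (m1 + k1) = C ^\<^sub>m ((m1 + m2) + (k1 + k2))"
      by (simp add: pow_mat_add[OF hC, symmetric] add.commute add.left_commute)
    finally show ?thesis using s1 s2 by simp
  qed
  show ?thesis
    by (rule use_intro[OF hA hC mc[OF R1 R2] mc[OF S2 S1] _ e1 e2 e3 e4 eu], insert l1, simp)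
qed


lemma div_cs:
  assumes d: "division_mat D"
  shows "cs D = vec (dim_col D) (\<lambda>_. 1)"
proof (rule eq_vecI)
  show "dim_vec (cs D) = dim_vec (vec (dim_col D) (\<lambda>_. 1::nat))" unfolding cs_def by simp
  fix j assume "j < dim_vec (vec (dim_col D) (\<lambda>_. 1::nat))"
  hence j: "j < dim_col D" by simp
  from d j have ex: "\<exists>!i. i < dim_row D \<and> D $$ (i,j) = 1" unfolding division_mat_def by blast
  then obtain i0 where i0: "i0 < dim_row D" "D $$ (i0,j) = 1" by blast
  have z: "D $$ (i,j) = 0" if "i < dim_row D" "i \<noteq> i0" for i
  proof -
    have "D $$ (i,j) \<in> {0,1}" using d j that(1) unfolding division_mat_def by blast
    moreover have "D $$ (i,j) \<noteq> 1" using ex i0 that by blast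
    ultimately show ?thesis by blast
  qed
  have "cs D $ j = (\<Sum>i \<in> {0..<dim_row D}. D $$ (i,j))"
    unfolding cs_def using j by (simp add: scalar_prod_def)
  also have "\<dots> = D $$ (i0,j) + (\<Sum>i \<in> {0..<dim_row D} - {i0}. D $$ (i,j))"
    by (rule sum.remove, simp, simp add: i0)
  also have "(\<Sum>i \<in> {0..<dim_row D} - {i0}. D $$ (i,j)) = 0"
  proof (rule sum.neutral, intro ballI)
    fix i assume "i \<in> {0..<dim_row D} - {i0}"
    thus "D $$ (i,j) = 0" by (intro z) auto
  qed
  finally show "cs D $ j = vec (dim_col D) (\<lambda>_. 1) $ j" using i0 j by simp
qed

lemma outsplit_use:
  assumes D: "(D :: nat mat) \<in> carrier_mat r c" and E: "E \<in> carrier_mat c r" and d: "division_mat D"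
  shows "unital_shift_equiv (D * E) (E * D)" and "unital_shift_equiv (E * D) (D * E)"
proof -
  note mc = mult_carrier_mat
  have DE: "D * E \<in> carrier_mat r r" and ED: "E * D \<in> carrier_mat c c" using D E by auto
  have p1: "(D * E) ^\<^sub>m 1 = D * E" using DE by simp
  have p2: "(E * D) ^\<^sub>m 1 = E * D" using ED by simp
  have a1: "(D * E) * D = D * (E * D)" by (rule assoc_mult_mat[OF D E D])
  have a2: "(E * D) * E = E * (D * E)" by (rule assoc_mult_mat[OF E D E])
  have csD: "cs D = vec c (\<lambda>_. 1)" using div_cs[OF d] D by simp
  have u1: "cs (D * (E * D) ^\<^sub>m 0) = cs ((E * D) ^\<^sub>m (0 + 0))"
    using D E csD by (simp add: cs_one)
  show "unital_shift_equiv (D * E) (E * D)"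
    by (rule use_intro[OF DE ED D E _ p1 p2 a1 a2 u1], simp)
  have "cs ((D * E) ^\<^sub>m (0 + 1)) = cs (D * E)" using p1 by simp
  also have "\<dots> = transpose_mat E *\<^sub>v cs D" by (rule cs_mult[OF D E])
  also have "\<dots> = transpose_mat E *\<^sub>v cs (1\<^sub>m c)" using csD by (simp add: cs_one)
  also have "\<dots> = cs (1\<^sub>m c * E)" by (rule cs_mult[OF one_carrier_mat E, symmetric])
  also have "\<dots> = cs (E * (D * E) ^\<^sub>m 0)" using D E by simp
  finally have u2: "cs (E * (D * E) ^\<^sub>m 0) = cs ((D * E) ^\<^sub>m (0 + 1))" by simp
  show "unital_shift_equiv (E * D) (D * E)"
    by (rule use_intro[OF ED DE E D _ p2 p1 a2 a1 u2], simp)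
qed

lemma prod_shape:
  assumes T: "(T :: nat mat) \<in> carrier_mat c r" and X: "X \<in> carrier_mat r c" and Y: "Y \<in> carrier_mat r c"
  shows "(T * X) * (T * Y) = T * ((X * T) * Y)"
proof -
  have "(T * X) * (T * Y) = T * (X * (T * Y))" by (rule assoc_mult_mat[OF T X mult_carrier_mat[OF T Y]])
  also have "X * (T * Y) = (X * T) * Y" by (rule assoc_mult_mat[OF X T Y, symmetric])
  finally show ?thesis .
qed

lemma balanced_use:
  assumes T: "(T :: nat mat) \<in> carrier_mat c r" and RA: "RA \<in> carrier_mat r c" and RB: "RB \<in> carrier_mat r c"
    and eq: "RA * T = RB * T"
  shows "unital_shift_equiv (T * RA) (T * RB)"
proof -
  have hA: "T * RA \<in> carrier_mat c c" and hB: "T * RB \<in> carrier_mat c c" using T RA RB by auto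
  have BA: "(T * RB) * (T * RA) = (T * RA) * (T * RA)"
    using prod_shape[OF T RB RA] prod_shape[OF T RA RA] eq by simp
  have AB: "(T * RA) * (T * RB) = (T * RB) * (T * RB)"
    using prod_shape[OF T RA RB] prod_shape[OF T RB RB] eq by simp
  have pA: "(T * RA) ^\<^sub>m 2 = (T * RA) * (T * RA)" using hA by (simp add: numeral_2_eq_2)
  have pB: "(T * RB) ^\<^sub>m 2 = (T * RB) * (T * RB)" using hB by (simp add: numeral_2_eq_2)
  have u: "cs ((T * RB) * (T * RB) ^\<^sub>m 0) = cs ((T * RB) ^\<^sub>m (0 + 1))" using hB T RB by simp
  have e1: "(T * RA) ^\<^sub>m 2 = (T * RB) * (T * RA)" using pA BA by simp
  have e2: "(T * RB) ^\<^sub>m 2 = (T * RA) * (T * RB)" using pB AB by simp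
  show ?thesis
    by (rule use_intro[OF hA hB hB hA _ e1 e2 AB BA u], simp)
qed

lemma use_refl_gen:
  assumes hA: "(A :: nat mat) \<in> carrier_mat n n"
  shows "unital_shift_equiv A A"
proof -
  have p: "A ^\<^sub>m 1 = A" using hA by simp
  have u: "cs (1\<^sub>m n * A ^\<^sub>m 0) = cs (A ^\<^sub>m (0 + 0))" using hA by simp
  have e1: "A ^\<^sub>m 1 = 1\<^sub>m n * A" using p hA by simp
  have e2: "A ^\<^sub>m 1 = A * 1\<^sub>m n" using p hA by simp
  have e3: "A * 1\<^sub>m n = 1\<^sub>m n * A" using hA by simp
  show ?thesis
    by (rule use_intro[OF hA hA one_carrier_mat hA _ e1 e2 e3 refl u], simp)
qed

lemma sq_carrier:
  assumes "square_mat (A :: nat mat)"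
  shows "A \<in> carrier_mat (dim_row A) (dim_row A)"
proof -
  have dc: "dim_col A = dim_row A" using assms unfolding square_mat.simps .
  show ?thesis by (rule carrier_matI, rule refl, rule dc)
qed

lemma use_refl:
  assumes "square_mat (A :: nat mat)"
  shows "unital_shift_equiv A A"
  by (rule use_refl_gen[OF sq_carrier[OF assms]])


lemma bes_use:
  assumes h: "balanced_elem_sse y z"
  shows "unital_shift_equiv y z" and "unital_shift_equiv z y"
proof -
  from h obtain D RA RB where sy: "sq_nzr y" and d: "division_mat D"
    and rA: "dim_row RA = dim_row D" and rB: "dim_row RB = dim_row D"
    and ey: "y = transpose_mat D * RA" and ez: "z = transpose_mat D * RB"
    and eq: "RA * transpose_mat D = RB * transpose_mat D"
    and sz: "sq_nzr z"
    unfolding balanced_elem_sse_def by blast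
  have qy: "square_mat y" using sy unfolding sq_nzr_def by (rule conjunct1)
  have qz: "square_mat z" using sz unfolding sq_nzr_def by (rule conjunct1)
  have cy: "dim_col y = dim_row y" using qy unfolding square_mat.simps .
  have cz: "dim_col z = dim_row z" using qz unfolding square_mat.simps .
  have T: "transpose_mat D \<in> carrier_mat (dim_col D) (dim_row D)" by simp
  have cA: "dim_col RA = dim_col D" using cy unfolding ey by simp
  have cB: "dim_col RB = dim_col D" using cz unfolding ez by simp
  have RA: "RA \<in> carrier_mat (dim_row D) (dim_col D)" using rA cA by (intro carrier_matI)
  have RB: "RB \<in> carrier_mat (dim_row D) (dim_col D)" using rB cB by (intro carrier_matI)
  show "unital_shift_equiv y z" unfolding ey ez by (rule balanced_use[OF T RA RB eq])
  show "unital_shift_equiv z y" unfolding ey ez by (rule balanced_use[OF T RB RA eq[symmetric]])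
qed

lemma outsplit_step:
  assumes h: "outsplit y z"
  shows "unital_shift_equiv y z" and "unital_shift_equiv z y"
proof -
  from h obtain D E where d: "division_mat D" and c1: "dim_col D = dim_row E"
    and c2: "dim_col E = dim_row D" and ey: "y = D * E" and ez: "z = E * D"
    unfolding outsplit_def by blast
  have D: "D \<in> carrier_mat (dim_row D) (dim_col D)" by (intro carrier_matI) simp_all
  have E: "E \<in> carrier_mat (dim_col D) (dim_row D)" using c1 c2 by (intro carrier_matI) simp_all
  show "unital_shift_equiv y z" unfolding ey ez by (rule outsplit_use(1)[OF D E d])
  show "unital_shift_equiv z y" unfolding ey ez by (rule outsplit_use(2)[OF D E d])
qed

lemma step_use:
  assumes "balanced_elem_sse y z \<or> balanced_elem_sse z y \<or> outsplit y z \<or> outsplit z y"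
  shows "unital_shift_equiv y z"
  using assms bes_use outsplit_step by blast

theorem proposition4p1:
  fixes A B :: "nat mat"
  assumes "square_mat A" and "square_mat B"
  assumes "balanced_sse A B"
  shows "unital_shift_equiv A B"
  using assms(3)[unfolded balanced_sse_def]
proof (induction rule: rtranclp_induct)
  case base
  then show ?case by (rule use_refl[OF assms(1)])
next
  case (step y z)
  show ?case by (rule use_trans[OF step.IH step_use[OF step.hyps(2)]])
qed

end
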